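(* Let $(H,k,\chi)$ be an instance of Precoloring Extension with $H=(V,F)$, $V=\{1,\dots,n\}$, $H$ having at least one edge. Construct a $P_n\,|\,\mathrm{conc}\,|\,C_{\max}$ instance as follows: jobs $1,\dots,n$ with $p_j=1$ and conflict graph initially $G=H$; jobs $a,b$ with $p_a=p_b=1$ and jobs $a',b'$ with $p_{a'}=p_{b'}=k-1$, with conflict edges $\{a,a'\},\{b,b'\},\{a,b\}$; for each $j\in V_0$ with $\chi(j)\in\{2,\dots,k-1\}$, jobs $j(1),j(2)$ with $p_{j(1)}=\chi(j)-1$, $p_{j(2)}=k-\chi(j)$ and conflict edges $\{j,j(1)\},\{j,j(2)\},\{j(1),j(2)\},\{a,j\},\{b,j\},\{a,j(2)\},\{b,j(1)\}$; for each $j\in V_0$ with $\chi(j)=1$, a job $j(2)$ with $p_{j(2)}=k-1$ and conflict edges $\{j,j(2)\},\{b,j\},\{a,j(2)\}$; for each $j\in V_0$ with $\chi(j)=k$, a job $j(1)$ with $p_{j(1)}=k-1$ and conflict edges $\{j,j(1)\},\{a,j\},\{b,j(1)\}$. If the constructed instance has a feasible schedule $C$ with $C_{\max}\le k$, then $(H,k,\chi)$ has a solution $\chi':\{1,\dots,n\}\to\{1,\dots,k\}$.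
   Context: Precoloring Extension: given a graph $H=(V,F)$, an integer $k$, and a proper coloring $\chi:V_0\to\{1,\dots,k\}$ of $H[V_0]$ for some $V_0\subseteq V$, a solution is a proper coloring $\chi':V\to\{1,\dots,k\}$ of $H$ with $\chi'(v)=\chi(v)$ for all $v\in V_0$. In $P_n\,|\,\mathrm{conc}\,|\,C_{\max}$, each job $j$ has integer processing time $p_j\ge1$ and release time $0$, and there is a conflict graph $G$; a schedule $C$ assigning each job a completion time $C_j\in\mathbb{N}$ is feasible if $C_j-p_j\ge0$ for all $j$ and $[C_i-p_i,C_i)\cap[C_j-p_j,C_j)=\emptyset$ for all edges $\{i,j\}$ of $G$; $C_{\max}=\max_j C_j$. *)

theory Defs
  imports Main
begin

definition simple_graph_on :: "nat set \<Rightarrow> nat set set \<Rightarrow> bool" where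
  "simple_graph_on V F \<longleftrightarrow> (\<forall>e\<in>F. e \<subseteq> V \<and> card e = 2)"

definition proper_precoloring ::
  "nat set set \<Rightarrow> nat \<Rightarrow> nat set \<Rightarrow> (nat \<Rightarrow> nat) \<Rightarrow> bool" where
  "proper_precoloring F k V0 \<chi> \<longleftrightarrow>
     (\<forall>v\<in>V0. \<chi> v \<in> {1..k}) \<and>
     (\<forall>u v. {u, v} \<in> F \<longrightarrow> u \<in> V0 \<longrightarrow> v \<in> V0 \<longrightarrow> \<chi> u \<noteq> \<chi> v)"

definition pe_solution ::
  "nat set \<Rightarrow> nat set set \<Rightarrow> nat \<Rightarrow> nat set \<Rightarrow> (nat \<Rightarrow> nat) \<Rightarrow> (nat \<Rightarrow> nat) \<Rightarrow> bool" where
  "pe_solution V F k V0 \<chi> \<chi>' \<longleftrightarrow>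
     (\<forall>v\<in>V. \<chi>' v \<in> {1..k}) \<and>
     (\<forall>u v. {u, v} \<in> F \<longrightarrow> \<chi>' u \<noteq> \<chi>' v) \<and>
     (\<forall>v\<in>V0. \<chi>' v = \<chi> v)"

datatype job = Orig nat | JA | JB | JA' | JB' | J1 nat | J2 nat

definition mid_col :: "nat \<Rightarrow> nat \<Rightarrow> bool" where
  "mid_col k c \<longleftrightarrow> 2 \<le> c \<and> c \<le> k - 1"

definition red_jobs :: "nat \<Rightarrow> nat \<Rightarrow> nat set \<Rightarrow> (nat \<Rightarrow> nat) \<Rightarrow> job set" where
  "red_jobs n k V0 \<chi> =
     Orig ` {1..n} \<union> {JA, JB, JA', JB'}
     \<union> J1 ` {j \<in> V0. mid_col k (\<chi> j) \<or> \<chi> j = k}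
     \<union> J2 ` {j \<in> V0. mid_col k (\<chi> j) \<or> \<chi> j = 1}"

fun red_p :: "nat \<Rightarrow> (nat \<Rightarrow> nat) \<Rightarrow> job \<Rightarrow> nat" where
  "red_p k \<chi> (Orig j) = 1"
| "red_p k \<chi> JA = 1"
| "red_p k \<chi> JB = 1"
| "red_p k \<chi> JA' = k - 1"
| "red_p k \<chi> JB' = k - 1"
| "red_p k \<chi> (J1 j) = (if \<chi> j = k then k - 1 else \<chi> j - 1)"
| "red_p k \<chi> (J2 j) = (if \<chi> j = 1 then k - 1 else k - \<chi> j)"

definition red_G :: "nat set set \<Rightarrow> nat \<Rightarrow> nat set \<Rightarrow> (nat \<Rightarrow> nat) \<Rightarrow> job set set" where
  "red_G F k V0 \<chi> =
     {{Orig u, Orig v} | u v. {u, v} \<in> F}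
     \<union> {{JA, JA'}, {JB, JB'}, {JA, JB}}
     \<union> (\<Union>j \<in> {j \<in> V0. mid_col k (\<chi> j)}.
          {{Orig j, J1 j}, {Orig j, J2 j}, {J1 j, J2 j}, {JA, Orig j}, {JB, Orig j},
           {JA, J2 j}, {JB, J1 j}})
     \<union> (\<Union>j \<in> {j \<in> V0. \<chi> j = 1}. {{Orig j, J2 j}, {JB, Orig j}, {JA, J2 j}})
     \<union> (\<Union>j \<in> {j \<in> V0. \<chi> j = k}. {{Orig j, J1 j}, {JA, Orig j}, {JB, J1 j}})"

definition feasible_schedule ::
  "'j set \<Rightarrow> ('j \<Rightarrow> nat) \<Rightarrow> 'j set set \<Rightarrow> ('j \<Rightarrow> nat) \<Rightarrow> bool" where
  "feasible_schedule J p G C \<longleftrightarrow>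
     (\<forall>j\<in>J. p j \<le> C j) \<and>
     (\<forall>i j. {i, j} \<in> G \<longrightarrow> i \<noteq> j \<longrightarrow> {C i - p i ..< C i} \<inter> {C j - p j ..< C j} = {})"

definition Cmax :: "'j set \<Rightarrow> ('j \<Rightarrow> nat) \<Rightarrow> nat" where
  "Cmax J C = Max (C ` J)"

end

theory Submission
  imports Defs
begin

lemma disj_iv:
  assumes "{a - p..<a} \<inter> {b - q..<(b::nat)} = {}" "0 < p" "0 < q" "p \<le> a" "q \<le> b"
  shows "a \<le> b - q \<or> b \<le> a - p"
proof (rule ccontr)
  assume "\<not> ?thesis"
  then have "max (a-p) (b-q) \<in> {a - p..<a} \<inter> {b - q..<(b::nat)}" using assms by auto
  then show False using assms(1) by blast
qed

lemma mid1:
  fixes x y z a b c k :: nat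
  assumes s1: "x + (c - 1) \<le> y \<or> y + 1 \<le> x"
    and s2: "x + (k - c) \<le> z \<or> z + 1 \<le> x"
    and s3: "y + (k - c) \<le> z \<or> z + (c - 1) \<le> y"
    and s4: "a + 1 \<le> x \<or> x + 1 \<le> a"
    and s5: "b + 1 \<le> x \<or> x + 1 \<le> b"
    and s6: "a + (k - c) \<le> z \<or> z + 1 \<le> a"
    and s7: "b + (c - 1) \<le> y \<or> y + 1 \<le> b"
    and d: "c - 1 \<le> y" "y \<le> k" "k - c \<le> z" "z \<le> k" "x \<le> k" "1 \<le> x"
    and m: "2 \<le> c" "c \<le> k - 1"
  shows "(a = 1 \<and> b = k \<longrightarrow> x = c) \<and> (a = k \<and> b = 1 \<longrightarrow> x = k + 1 - c)"
proof -
  obtain q1 q2 where q: "c = q1 + 1" "k = q1 + q2 + 1" "1 \<le> q1" "1 \<le> q2"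
  proof
    show "c = (c - 1) + 1" "k = (c - 1) + (k - c) + 1" "1 \<le> c - 1" "1 \<le> k - c" using m by auto
  qed
  have e1: "c - 1 = q1" "k - c = q2" using q by auto
  note s = s1[unfolded e1] s2[unfolded e1] s3[unfolded e1] s6[unfolded e1] s7[unfolded e1]
  note dd = d[unfolded e1]
  have A: "x = c" if ab: "a = 1" "b = k"
  proof -
    have x2: "2 \<le> x" using s4 ab d by auto
    have xk: "x + 1 \<le> k" using s5 ab d by auto
    have z1: "1 + q2 \<le> z" using s(4) ab dd q by auto
    have y1: "y + 1 \<le> k" using s(5) ab dd q by auto
    have yz: "y + q2 \<le> z" using s(3) z1 y1 q by auto
    have yx: "y + 1 \<le> x" using s(1) x2 yz dd q by auto
    have "x + q2 \<le> z" using s(2) yx yz xk q dd by auto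
    then show ?thesis using yx dd q by auto
  qed
  have B: "x = k + 1 - c" if ab: "a = k" "b = 1"
  proof -
    have xk: "x + 1 \<le> k" using s4 ab d by auto
    have x2: "2 \<le> x" using s5 ab d by auto
    have z1: "z + 1 \<le> k" using s(4) ab dd q by auto
    have y1: "1 + q1 \<le> y" using s(5) ab dd q by auto
    have zy: "z + q1 \<le> y" using s(3) z1 y1 q by auto
    have zx: "z + 1 \<le> x" using s(2) x2 zy dd q by auto
    have "x + q1 \<le> y" using s(1) zx zy xk q dd by auto
    then show ?thesis using zx dd q by auto
  qed
  show ?thesis using A B by blast
qed

theorem lemma10:
  fixes n k :: nat and F :: "nat set set" and V0 :: "nat set" and \<chi> :: "nat \<Rightarrow> nat"
    and C :: "job \<Rightarrow> nat"
  assumes "simple_graph_on {1..n} F"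
    and "F \<noteq> {}"
    and "V0 \<subseteq> {1..n}"
    and "proper_precoloring F k V0 \<chi>"
    and "feasible_schedule (red_jobs n k V0 \<chi>) (red_p k \<chi>) (red_G F k V0 \<chi>) C"
    and "Cmax (red_jobs n k V0 \<chi>) C \<le> k"
  shows "\<exists>\<chi>'. pe_solution {1..n} F k V0 \<chi> \<chi>'"
proof -
  define J where "J = red_jobs n k V0 \<chi>"
  define P where "P = red_p k \<chi>"
  define G where "G = red_G F k V0 \<chi>"
  have finV0: "finite V0" using assms(3) finite_subset by blast
  have finJ: "finite J" unfolding J_def red_jobs_def using finV0 by auto
  have Cle: "C j \<le> k" if "j \<in> J" for j
  proof -
    have "C j \<le> Max (C ` J)" using finJ that by auto
    then show ?thesis using assms(6) unfolding Cmax_def J_def by simp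
  qed
  have Pge: "P j \<le> C j" if "j \<in> J" for j
    using assms(5) that unfolding feasible_schedule_def J_def P_def by blast
  have sep: "C i + P j \<le> C j \<or> C j + P i \<le> C i"
    if "{i,j} \<in> G" "i \<noteq> j" "i \<in> J" "j \<in> J" "0 < P i" "0 < P j" for i j
  proof -
    have "{C i - P i ..< C i} \<inter> {C j - P j ..< C j} = {}"
      using assms(5) that unfolding feasible_schedule_def G_def P_def by blast
    then have "C i \<le> C j - P j \<or> C j \<le> C i - P i" using disj_iv that Pge by blast
    then show ?thesis using Pge[OF that(3)] Pge[OF that(4)] by auto
  qed
  have PO: "P (Orig v) = 1" for v unfolding P_def by simp
  have JO: "Orig v \<in> J" if "v \<in> {1..n}" for v using that unfolding J_def red_jobs_def by simp
  have GO: "{Orig u, Orig v} \<in> G" if "{u,v} \<in> F" for u v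
    using that unfolding G_def red_G_def by blast
  have subK: "(\<Union>j \<in> {j \<in> V0. \<chi> j = k}. {{Orig j, J1 j}, {JA, Orig j}, {JB, J1 j}}) \<subseteq> G"
    unfolding G_def red_G_def by (rule Un_upper2)
  have sub1: "(\<Union>j \<in> {j \<in> V0. \<chi> j = 1}. {{Orig j, J2 j}, {JB, Orig j}, {JA, J2 j}}) \<subseteq> G"
    unfolding G_def red_G_def by (rule subset_trans[OF Un_upper2 Un_upper1])
  have subM: "(\<Union>j \<in> {j \<in> V0. mid_col k (\<chi> j)}.
          {{Orig j, J1 j}, {Orig j, J2 j}, {J1 j, J2 j}, {JA, Orig j}, {JB, Orig j},
           {JA, J2 j}, {JB, J1 j}}) \<subseteq> G"
    unfolding G_def red_G_def by (rule subset_trans[OF Un_upper2 subset_trans[OF Un_upper1 Un_upper1]])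
  obtain e where e: "e \<in> F" using assms(2) by blast
  then have "e \<subseteq> {1..n}" "card e = 2" using assms(1) unfolding simple_graph_on_def by auto
  then obtain u v where uv: "e = {u,v}" "u \<noteq> v" "u \<in> {1..n}" "v \<in> {1..n}"
    by (metis card_2_iff insert_subset)
  have "C (Orig u) + 1 \<le> C (Orig v) \<or> C (Orig v) + 1 \<le> C (Orig u)"
    using sep[of "Orig u" "Orig v"] GO[of u v] uv e JO PO by auto
  moreover have "1 \<le> C (Orig u)" "1 \<le> C (Orig v)" "C (Orig u) \<le> k" "C (Orig v) \<le> k"
    using Pge[of "Orig u"] Pge[of "Orig v"] Cle JO uv PO by auto
  ultimately have k2: "2 \<le> k" by linarith
  have JAB: "JA \<in> J" "JB \<in> J" "JA' \<in> J" "JB' \<in> J" unfolding J_def red_jobs_def by auto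
  have PAB: "P JA = 1" "P JB = 1" "P JA' = k - 1" "P JB' = k - 1" unfolding P_def by auto
  have GAB: "{JA, JA'} \<in> G" "{JB, JB'} \<in> G" "{JA, JB} \<in> G" unfolding G_def red_G_def by auto
  have s1: "C JA + (k-1) \<le> C JA' \<or> C JA' + 1 \<le> C JA"
    using sep[OF GAB(1)] JAB PAB k2 by auto
  have s2: "C JB + (k-1) \<le> C JB' \<or> C JB' + 1 \<le> C JB"
    using sep[OF GAB(2)] JAB PAB k2 by auto
  have s3: "C JA + 1 \<le> C JB \<or> C JB + 1 \<le> C JA"
    using sep[OF GAB(3)] JAB PAB k2 by auto
  have bnd: "1 \<le> C JA" "C JA \<le> k" "1 \<le> C JB" "C JB \<le> k" "k - 1 \<le> C JA'" "C JA' \<le> k"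
     "k - 1 \<le> C JB'" "C JB' \<le> k"
    using Pge[OF JAB(1)] Pge[OF JAB(2)] Pge[OF JAB(3)] Pge[OF JAB(4)]
      Cle[OF JAB(1)] Cle[OF JAB(2)] Cle[OF JAB(3)] Cle[OF JAB(4)] PAB by auto
  have AB: "(C JA = 1 \<and> C JB = k) \<or> (C JA = k \<and> C JB = 1)"
    using s1 s2 s3 bnd k2 by linarith
  define \<chi>' where "\<chi>' = (if C JA = 1 then (\<lambda>v. C (Orig v)) else (\<lambda>v. k + 1 - C (Orig v)))"
  have rng: "1 \<le> C (Orig v) \<and> C (Orig v) \<le> k" if "v \<in> {1..n}" for v
    using Pge[of "Orig v"] Cle[of "Orig v"] JO[OF that] PO by auto
  have col: "\<chi>' v \<in> {1..k}" if "v \<in> {1..n}" for v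
    using rng[OF that] unfolding \<chi>'_def by auto
  have propc: "\<chi>' u \<noteq> \<chi>' v" if "{u,v} \<in> F" for u v
  proof -
    have "{u,v} \<subseteq> {1..n}" "card {u,v} = 2" using assms(1) that unfolding simple_graph_on_def by auto
    then have h: "u \<noteq> v" "u \<in> {1..n}" "v \<in> {1..n}" by auto
    have "C (Orig u) + 1 \<le> C (Orig v) \<or> C (Orig v) + 1 \<le> C (Orig u)"
      using sep[of "Orig u" "Orig v"] GO[OF that] h JO PO by auto
    then show ?thesis using rng[OF h(2)] rng[OF h(3)] unfolding \<chi>'_def by auto
  qed
  have pre: "\<chi>' j = \<chi> j" if jV: "j \<in> V0" for j
  proof -
    have jn: "j \<in> {1..n}" using jV assms(3) by auto
    have cj: "\<chi> j \<in> {1..k}" using assms(4) jV unfolding proper_precoloring_def by auto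
    note rj = rng[OF jn]
    consider "\<chi> j = 1" | "\<chi> j = k" | "mid_col k (\<chi> j)" using cj unfolding mid_col_def by force
    then show ?thesis
    proof cases
      case 1
      have mem1: "j \<in> {j \<in> V0. \<chi> j = 1}" using jV 1 by simp
      have J2: "J2 j \<in> J" unfolding J_def red_jobs_def using jV 1 by auto
      have P2: "P (J2 j) = k - 1" unfolding P_def using 1 by simp
      have G: "{Orig j, J2 j} \<in> G" "{JB, Orig j} \<in> G" "{JA, J2 j} \<in> G"
        using sub1 mem1 by blast+
      have a: "C (Orig j) + (k-1) \<le> C (J2 j) \<or> C (J2 j) + 1 \<le> C (Orig j)"
        using sep[OF G(1)] JO[OF jn] J2 PO P2 k2 by auto
      have b: "C JB + 1 \<le> C (Orig j) \<or> C (Orig j) + 1 \<le> C JB"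
        using sep[OF G(2)] JO[OF jn] JAB PO PAB by auto
      have c: "C JA + (k-1) \<le> C (J2 j) \<or> C (J2 j) + 1 \<le> C JA"
        using sep[OF G(3)] J2 JAB P2 PAB k2 by auto
      have d: "k - 1 \<le> C (J2 j)" "C (J2 j) \<le> k" using Pge[OF J2] Cle[OF J2] P2 by auto
      show ?thesis using a b c d rj AB k2 1 unfolding \<chi>'_def by auto
    next
      case 2
      have mem2: "j \<in> {j \<in> V0. \<chi> j = k}" using jV 2 by simp
      have J1: "J1 j \<in> J" unfolding J_def red_jobs_def using jV 2 by auto
      have P1: "P (J1 j) = k - 1" unfolding P_def using 2 by simp
      have G: "{Orig j, J1 j} \<in> G" "{JA, Orig j} \<in> G" "{JB, J1 j} \<in> G"
        using subK mem2 by blast+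
      have a: "C (Orig j) + (k-1) \<le> C (J1 j) \<or> C (J1 j) + 1 \<le> C (Orig j)"
        using sep[OF G(1)] JO[OF jn] J1 PO P1 k2 by auto
      have b: "C JA + 1 \<le> C (Orig j) \<or> C (Orig j) + 1 \<le> C JA"
        using sep[OF G(2)] JO[OF jn] JAB PO PAB by auto
      have c: "C JB + (k-1) \<le> C (J1 j) \<or> C (J1 j) + 1 \<le> C JB"
        using sep[OF G(3)] J1 JAB P1 PAB k2 by auto
      have d: "k - 1 \<le> C (J1 j)" "C (J1 j) \<le> k" using Pge[OF J1] Cle[OF J1] P1 by auto
      show ?thesis using a b c d rj AB k2 2 unfolding \<chi>'_def by auto
    next
      case 3
      then have m: "2 \<le> \<chi> j" "\<chi> j \<le> k - 1" unfolding mid_col_def by auto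
      have mem3: "j \<in> {j \<in> V0. mid_col k (\<chi> j)}" using jV 3 by simp
      have J12: "J1 j \<in> J" "J2 j \<in> J" unfolding J_def red_jobs_def using jV 3 by auto
      have P12: "P (J1 j) = \<chi> j - 1" "P (J2 j) = k - \<chi> j" unfolding P_def using m by auto
      have G: "{Orig j, J1 j} \<in> G" "{Orig j, J2 j} \<in> G" "{J1 j, J2 j} \<in> G"
          "{JA, Orig j} \<in> G" "{JB, Orig j} \<in> G" "{JA, J2 j} \<in> G" "{JB, J1 j} \<in> G"
        using subM mem3 by blast+
      have s1: "C (Orig j) + (\<chi> j - 1) \<le> C (J1 j) \<or> C (J1 j) + 1 \<le> C (Orig j)"
        using sep[OF G(1)] JO[OF jn] J12 PO P12 m by auto
      have s2: "C (Orig j) + (k - \<chi> j) \<le> C (J2 j) \<or> C (J2 j) + 1 \<le> C (Orig j)"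
        using sep[OF G(2)] JO[OF jn] J12 PO P12 m by auto
      have s3: "C (J1 j) + (k - \<chi> j) \<le> C (J2 j) \<or> C (J2 j) + (\<chi> j - 1) \<le> C (J1 j)"
        using sep[OF G(3)] J12 P12 m by auto
      have s4: "C JA + 1 \<le> C (Orig j) \<or> C (Orig j) + 1 \<le> C JA"
        using sep[OF G(4)] JO[OF jn] JAB PO PAB by auto
      have s5: "C JB + 1 \<le> C (Orig j) \<or> C (Orig j) + 1 \<le> C JB"
        using sep[OF G(5)] JO[OF jn] JAB PO PAB by auto
      have s6: "C JA + (k - \<chi> j) \<le> C (J2 j) \<or> C (J2 j) + 1 \<le> C JA"
        using sep[OF G(6)] J12 JAB P12 PAB m by auto
      have s7: "C JB + (\<chi> j - 1) \<le> C (J1 j) \<or> C (J1 j) + 1 \<le> C JB"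
        using sep[OF G(7)] J12 JAB P12 PAB m by auto
      have d: "\<chi> j - 1 \<le> C (J1 j)" "C (J1 j) \<le> k" "k - \<chi> j \<le> C (J2 j)" "C (J2 j) \<le> k"
        using Pge[OF J12(1)] Cle[OF J12(1)] Pge[OF J12(2)] Cle[OF J12(2)] P12 by auto
      have "C (Orig j) \<le> k" "1 \<le> C (Orig j)" using rj by simp_all
      note M = mid1[OF s1 s2 s3 s4 s5 s6 s7 d this m]
      show ?thesis using AB M m unfolding \<chi>'_def by auto
    qed
  qed
  show ?thesis unfolding pe_solution_def using col propc pre by blast
qed

end
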